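(* Let $u\in L_{\mathrm{up}}$ and $(\ell_1,\ell_2)\in A_u$, and let $e\in E$ be the last edge of the path in $G$ from $r$ to $\mathrm{apex}(\ell_2)$. Then $e\in P_u$.
   Context: Let $(G=(V,E),L,w)$ be a WTAP instance (spanning tree $G$, links $L\subseteq\binom V2$, weights $w>0$) with a fixed root $r\in V$, and let $F\subseteq L$ be a WTAP solution, i.e. $\bigcup_{\ell\in F}P_\ell=E$, where $P_\ell$ is the edge set of the tree path between the endpoints of $\ell$ and $V_\ell$ its vertex set. Ancestors of $v$ are the vertices on the $r$-$v$ path in $G$ (including $r$ and $v$); descendants are defined reciprocally. $\mathrm{apex}(\ell)$ is the vertex of $V_\ell$ closest to $r$. An up-link is a link $\{t,b\}$ with $t$ an ancestor of $b$; $L_{\mathrm{up}}$ is the set of up-links. For $v\in V$ let $B_v=\{\ell\in F\colon\mathrm{apex}(\ell)\text{ is a descendant of }v\}$. For an up-link $u=\{t,b\}$ with $t$ an ancestor of $b$, let $v_u$ be the ancestor of $t$ farthest from $r$ such that $P_u\subseteq\bigcup_{\ell\in B_{v_u}}P_\ell$, and fix $F_u\subseteq B_{v_u}$ inclusion-wise minimal with $P_u\subseteq\bigcup_{\ell\in F_u}P_\ell$. For $\ell\in F_u$ let $P_{u,\ell}=P_u\setminus\bigcup_{\bar\ell\in F_u\setminus\{\ell\}}P_{\bar\ell}$; these sets are nonempty, pairwise disjoint, and each is the edge set of a path. Define $\ell_1\prec_u\ell_2$ iff the edges of $P_{u,\ell_1}$ appear before those of $P_{u,\ell_2}$ on the $t$-$b$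 path in $G$. If $\ell_1\prec_u\cdots\prec_u\ell_q$ are the links of $F_u$, let $A_u=\{(\ell_i,\ell_{i+1})\colon i=1,\dots,q-1\}$. *)

theory Defs
  imports Complex_Main
begin

text \<open>Graphs: vertices of type 'a, edges and links are 2-element sets of vertices.\<close>

definition is_tpath :: "'a set set \<Rightarrow> 'a list \<Rightarrow> 'a \<Rightarrow> 'a \<Rightarrow> bool" where
  "is_tpath E xs x y \<longleftrightarrow> xs \<noteq> [] \<and> hd xs = x \<and> last xs = y \<and> distinct xs \<and>
     (\<forall>i. Suc i < length xs \<longrightarrow> {xs ! i, xs ! Suc i} \<in> E)"

definition is_cycle :: "'a set set \<Rightarrow> 'a list \<Rightarrow> bool" where
  "is_cycle E xs \<longleftrightarrow> length xs \<ge> 3 \<and> distinct xs \<and>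
     (\<forall>i. Suc i < length xs \<longrightarrow> {xs ! i, xs ! Suc i} \<in> E) \<and> {last xs, hd xs} \<in> E"

definition spanning_tree :: "'a set \<Rightarrow> 'a set set \<Rightarrow> bool" where
  "spanning_tree V E \<longleftrightarrow> finite V \<and> E \<subseteq> {{x, y} | x y. x \<in> V \<and> y \<in> V \<and> x \<noteq> y} \<and>
     (\<forall>x\<in>V. \<forall>y\<in>V. \<exists>xs. is_tpath E xs x y) \<and> (\<nexists>xs. is_cycle E xs)"

definition tpath :: "'a set set \<Rightarrow> 'a \<Rightarrow> 'a \<Rightarrow> 'a list" where
  "tpath E x y = (THE xs. is_tpath E xs x y)"

definition list_edges :: "'a list \<Rightarrow> 'a set set" where
  "list_edges xs = {{xs ! i, xs ! Suc i} | i. Suc i < length xs}"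

definition Pl :: "'a set set \<Rightarrow> 'a set \<Rightarrow> 'a set set" where
  "Pl E l = \<Union>{list_edges (tpath E x y) | x y. l = {x, y}}"

definition Vl :: "'a set set \<Rightarrow> 'a set \<Rightarrow> 'a set" where
  "Vl E l = \<Union>{set (tpath E x y) | x y. l = {x, y}}"

definition ancestor :: "'a set set \<Rightarrow> 'a \<Rightarrow> 'a \<Rightarrow> 'a \<Rightarrow> bool" where
  "ancestor E r a v \<longleftrightarrow> a \<in> set (tpath E r v)"

definition depth :: "'a set set \<Rightarrow> 'a \<Rightarrow> 'a \<Rightarrow> nat" where
  "depth E r v = length (tpath E r v) - 1"

definition apex :: "'a set set \<Rightarrow> 'a \<Rightarrow> 'a set \<Rightarrow> 'a" where
  "apex E r l = (THE a. a \<in> Vl E l \<and> (\<forall>x\<in>Vl E l. depth E r a \<le> depth E r x))"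

definition Bv :: "'a set set \<Rightarrow> 'a \<Rightarrow> 'a set set \<Rightarrow> 'a \<Rightarrow> 'a set set" where
  "Bv E r F v = {l \<in> F. ancestor E r v (apex E r l)}"

definition is_vu :: "'a set set \<Rightarrow> 'a \<Rightarrow> 'a set set \<Rightarrow> 'a set \<Rightarrow> 'a \<Rightarrow> 'a \<Rightarrow> bool" where
  "is_vu E r F u t v \<longleftrightarrow> ancestor E r v t \<and> Pl E u \<subseteq> \<Union>(Pl E ` Bv E r F v) \<and>
     (\<forall>w. ancestor E r w t \<and> Pl E u \<subseteq> \<Union>(Pl E ` Bv E r F w) \<longrightarrow> depth E r w \<le> depth E r v)"

definition is_Fu :: "'a set set \<Rightarrow> 'a \<Rightarrow> 'a set set \<Rightarrow> 'a set \<Rightarrow> 'a \<Rightarrow> 'a set set \<Rightarrow> bool" where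
  "is_Fu E r F u v Fu \<longleftrightarrow> Fu \<subseteq> Bv E r F v \<and> Pl E u \<subseteq> \<Union>(Pl E ` Fu) \<and>
     (\<forall>H. H \<subset> Fu \<longrightarrow> \<not> Pl E u \<subseteq> \<Union>(Pl E ` H))"

definition Pul :: "'a set set \<Rightarrow> 'a set \<Rightarrow> 'a set set \<Rightarrow> 'a set \<Rightarrow> 'a set set" where
  "Pul E u Fu l = Pl E u - \<Union>(Pl E ` (Fu - {l}))"

definition prec_u :: "'a set set \<Rightarrow> 'a \<Rightarrow> 'a \<Rightarrow> 'a set set \<Rightarrow> 'a set \<Rightarrow> 'a set \<Rightarrow> bool" where
  "prec_u E t b Fu l1 l2 \<longleftrightarrow> (let xs = tpath E t b; u = {t, b} in
     \<forall>e1\<in>Pul E u Fu l1. \<forall>e2\<in>Pul E u Fu l2. \<exists>i j. i < j \<and> Suc j < length xs \<and>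
        e1 = {xs ! i, xs ! Suc i} \<and> e2 = {xs ! j, xs ! Suc j})"

definition in_Au :: "'a set set \<Rightarrow> 'a \<Rightarrow> 'a \<Rightarrow> 'a set set \<Rightarrow> 'a set \<Rightarrow> 'a set \<Rightarrow> bool" where
  "in_Au E t b Fu l1 l2 \<longleftrightarrow> l1 \<in> Fu \<and> l2 \<in> Fu \<and> prec_u E t b Fu l1 l2 \<and>
     \<not> (\<exists>l\<in>Fu. prec_u E t b Fu l1 l \<and> prec_u E t b Fu l l2)"

end

theory Submission
  imports Defs
begin


lemma tpath_rev:
  assumes "is_tpath E xs x y" shows "is_tpath E (rev xs) y x"
proof -
  have "\<forall>i. Suc i < length (rev xs) \<longrightarrow> {rev xs ! i, rev xs ! Suc i} \<in> E"
  proof (intro allI impI)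
    fix i assume i: "Suc i < length (rev xs)"
    let ?n = "length xs"
    have "{xs ! (?n - Suc (Suc i)), xs ! Suc (?n - Suc (Suc i))} \<in> E"
      using assms i unfolding is_tpath_def by auto
    moreover have "Suc (?n - Suc (Suc i)) = ?n - Suc i" using i by auto
    ultimately show "{rev xs ! i, rev xs ! Suc i} \<in> E" using i by (auto simp: rev_nth insert_commute)
  qed
  then show ?thesis using assms unfolding is_tpath_def by (auto simp: hd_rev last_rev)
qed

lemma tpath_take:
  assumes "is_tpath E xs x y" "k < length xs"
  shows "is_tpath E (take (Suc k) xs) x (xs ! k)"
proof -
  have d: "xs \<noteq> []" "hd xs = x" "distinct xs" "\<And>i. Suc i < length xs \<Longrightarrow> {xs ! i, xs ! Suc i} \<in> E"
    using assms(1) unfolding is_tpath_def by auto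
  show ?thesis unfolding is_tpath_def
  proof (intro conjI allI impI)
    show "hd (take (Suc k) xs) = x" using d by (simp add: hd_take)
    show "last (take (Suc k) xs) = xs ! k" by (simp add: take_Suc_conv_app_nth[OF assms(2)])
    show "distinct (take (Suc k) xs)" using d by simp
    show "take (Suc k) xs \<noteq> []" using d by simp
  next
    fix i assume "Suc i < length (take (Suc k) xs)"
    then show "{take (Suc k) xs ! i, take (Suc k) xs ! Suc i} \<in> E" using d(4)[of i] by auto
  qed
qed

lemma tpath_drop:
  assumes "is_tpath E xs x y" "k < length xs"
  shows "is_tpath E (drop k xs) (xs ! k) y"
  using assms unfolding is_tpath_def
  by (auto simp: hd_drop_conv_nth last_drop)

lemma tpath_app:
  assumes "is_tpath E xs x y" "z \<notin> set xs" "{y, z} \<in> E"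
  shows "is_tpath E (xs @ [z]) x z"
  unfolding is_tpath_def
proof (intro conjI allI impI)
  fix i assume i: "Suc i < length (xs @ [z])"
  show "{(xs @ [z]) ! i, (xs @ [z]) ! Suc i} \<in> E"
  proof (cases "Suc i < length xs")
    case True then show ?thesis using assms(1) unfolding is_tpath_def by (auto simp: nth_append)
  next
    case False
    then have "i = length xs - 1" using i by auto
    moreover have "xs \<noteq> []" "last xs = y" using assms(1) unfolding is_tpath_def by auto
    ultimately show ?thesis using assms(3) False i by (auto simp: nth_append last_conv_nth)
  qed
qed (use assms in \<open>auto simp: is_tpath_def\<close>)

lemma distinct_hd_last:
  assumes "distinct xs" "xs \<noteq> []" "hd xs = last xs" shows "xs = [hd xs]"
  using assms by (cases xs) (auto split: if_splits)

lemma two_paths_cycle: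
  assumes X: "is_tpath E xs x y" and Y: "is_tpath E ys x y"
    and l: "1 < length xs" "1 < length ys" and d: "xs ! 1 \<noteq> ys ! 1"
  shows "\<exists>c. is_cycle E c"
proof -
  have Xd: "distinct xs" "hd xs = x" "last xs = y" and Xe: "\<And>i. Suc i < length xs \<Longrightarrow> {xs ! i, xs ! Suc i} \<in> E"
    using X unfolding is_tpath_def by auto
  have Yd: "distinct ys" "hd ys = x" "last ys = y" and Ye: "\<And>i. Suc i < length ys \<Longrightarrow> {ys ! i, ys ! Suc i} \<in> E"
    using Y unfolding is_tpath_def by auto
  have "xs \<noteq> []" "ys \<noteq> []" using l by auto
  then have x0: "xs ! 0 = x" "ys ! 0 = x" using Xd Yd by (auto simp: hd_conv_nth[symmetric])
  define P where "P j \<longleftrightarrow> 1 \<le> j \<and> j < length ys \<and> ys ! j \<in> set xs" for j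
  have "P (length ys - 1)" unfolding P_def using l Xd Yd
    by (metis One_nat_def Suc_diff_1 Suc_lessD diff_less last_conv_nth last_in_set less_Suc_eq_le list.size(3) not_less_zero zero_less_one)
  define j where "j = (LEAST j. P j)"
  have Pj: "P j" unfolding j_def by (rule LeastI) fact
  have jmin: "\<And>k. k < j \<Longrightarrow> \<not> P k" unfolding j_def by (rule not_less_Least)
  have j1: "1 \<le> j" "j < length ys" "ys ! j \<in> set xs" using Pj P_def by auto
  obtain i where i: "i < length xs" "xs ! i = ys ! j" using j1 by (metis in_set_conv_nth)
  have i0: "i \<noteq> 0"
  proof
    assume "i = 0"
    then have "ys ! j = ys ! 0" using i x0 by simp
    moreover have "0 < length ys" using l(2) by linarith
    ultimately show False using Yd(1) j1 nth_eq_iff_index_eq[of ys j 0] by auto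
  qed
  have ij3: "i + j \<ge> 3"
  proof (rule ccontr)
    assume "\<not> ?thesis"
    then have "i = 1" "j = 1" using i0 j1 by auto
    then show False using i d by simp
  qed
  define f where "f p = (if p \<le> i then xs ! p else ys ! (j + i - p))" for p
  have fge: "f p = ys ! (j + i - p)" if "i \<le> p" for p
    using that i by (auto simp: f_def)
  define c where "c = map f [0..<i+j]"
  have cn: "\<And>p. p < i + j \<Longrightarrow> c ! p = f p" unfolding c_def by simp
  have lc: "length c = i + j" unfolding c_def by simp
  have inj: "inj_on f {0..<i+j}"
  proof (rule inj_onI)
    fix p q assume p: "p \<in> {0..<i+j}" and q: "q \<in> {0..<i+j}" and fpq: "f p = f q"
    have mid: False if "p \<le> i" "\<not> q \<le> i" "f p = f q" "q < i + j" for p q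
    proof -
      have "xs ! p \<in> set xs" using that(1) i(1) by simp
      then have "ys ! (j + i - q) \<in> set xs" using that by (simp add: f_def)
      moreover have "j + i - q < j" "1 \<le> j + i - q" using that by auto
      ultimately show False using jmin[of "j + i - q"] j1 unfolding P_def by auto
    qed
    show "p = q"
    proof (cases "p \<le> i"; cases "q \<le> i")
      assume "p \<le> i" "q \<le> i" then show ?thesis using fpq Xd(1) i nth_eq_iff_index_eq[of xs p q]
        by (auto simp: f_def)
    next
      assume "\<not> p \<le> i" "\<not> q \<le> i" then show ?thesis using fpq Yd(1) j1 p q nth_eq_iff_index_eq[of ys "j+i-p" "j+i-q"]
        by (auto simp: f_def)
    qed (use mid[of p q] mid[of q p] fpq p q in auto)
  qed
  have "is_cycle E c"
    unfolding is_cycle_def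
  proof (intro conjI allI impI)
    show "3 \<le> length c" using lc ij3 by simp
    show "distinct c" unfolding c_def using inj by (simp add: distinct_map)
  next
    fix p assume p: "Suc p < length c"
    show "{c ! p, c ! Suc p} \<in> E"
    proof (cases "Suc p \<le> i")
      case True
      then show ?thesis using cn p lc Xe[of p] i by (auto simp: f_def)
    next
      case False
      then have "c ! p = ys ! Suc (j + i - Suc p)" "c ! Suc p = ys ! (j + i - Suc p)"
        using cn p lc fge[of p] fge[of "Suc p"] by (auto simp: Suc_diff_Suc)
      moreover have "Suc (j + i - Suc p) < length ys" using j1 p lc False by auto
      ultimately show ?thesis using Ye[of "j + i - Suc p"] by (simp add: insert_commute)
    qed
  next
    have "c ! (i + j - 1) = ys ! 1"
      using cn[of "i+j-1"] fge[of "i+j-1"] ij3 i0 j1 by auto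
    moreover have "c \<noteq> []" using lc ij3 by auto
    ultimately have "last c = ys ! 1" using lc by (simp add: last_conv_nth)
    moreover have "hd c = ys ! 0" using lc ij3 cn[of 0] x0 i0 \<open>c \<noteq> []\<close> by (simp add: hd_conv_nth f_def)
    ultimately show "{last c, hd c} \<in> E" using Ye[of 0] l by (simp add: insert_commute)
  qed
  then show ?thesis by blast
qed



lemma tpath_ne: "is_tpath E xs x y \<Longrightarrow> xs \<noteq> [] \<and> last xs = y \<and> hd xs = x \<and> distinct xs"
  unfolding is_tpath_def by auto

lemma tpath_unique:
  assumes tree: "spanning_tree V E"
  shows "is_tpath E xs x y \<Longrightarrow> is_tpath E ys x y \<Longrightarrow> xs = ys"
proof (induction xs arbitrary: x ys)
  case Nil then show ?case by (simp add: is_tpath_def)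
next
  case (Cons a xs')
  have nc: "\<nexists>c. is_cycle E c" using tree unfolding spanning_tree_def by blast
  have ys: "ys \<noteq> []" "hd ys = x" "last ys = y" "distinct ys" using tpath_ne[OF Cons.prems(2)] by auto
  have xs: "hd (a # xs') = x" "last (a # xs') = y" "distinct (a # xs')" using tpath_ne[OF Cons.prems(1)] by auto
  show ?case
  proof (cases "xs' = []")
    case True
    then have "x = y" using xs by simp
    then have "ys = [hd ys]" using distinct_hd_last[of ys] ys by simp
    then show ?thesis using True xs ys by simp
  next
    case False
    show ?thesis
    proof (cases "length ys = 1")
      case True
      then obtain z where z: "ys = [z]" by (metis One_nat_def length_0_conv length_Suc_conv)
      then have "x = y" using ys by simp
      then have "last xs' = a" using xs False by simp
      then show ?thesis using xs False by (metis distinct.simps(2) last_in_set)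
    next
      case ly: False
      have l1: "1 < length (a # xs')" using False by simp
      have "0 < length ys" using ys(1) by simp
      then have l2: "1 < length ys" using ly by linarith
      show ?thesis
      proof (cases "(a # xs') ! 1 = ys ! 1")
        case False
        then show ?thesis using two_paths_cycle[OF Cons.prems l1 l2] nc by blast
      next
        case True
        have p1: "is_tpath E (drop 1 (a # xs')) ((a # xs') ! 1) y"
          by (rule tpath_drop[OF Cons.prems(1) l1])
        have p2: "is_tpath E (drop 1 ys) (ys ! 1) y"
          by (rule tpath_drop[OF Cons.prems(2) l2])
        have "xs' = drop 1 ys" using Cons.IH[of "(a # xs') ! 1" "drop 1 ys"] p1 p2 True by simp
        moreover have "a = hd ys" using xs ys by simp
        moreover have "ys = hd ys # drop 1 ys" using ys(1) by (cases ys) simp_all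
        ultimately show ?thesis by simp
      qed
    qed
  qed
qed

lemma tpath_eq:
  assumes tree: "spanning_tree V E" and "is_tpath E xs x y"
  shows "tpath E x y = xs"
  unfolding tpath_def
proof (rule the_equality)
  show "is_tpath E xs x y" by fact
  show "\<And>ys. is_tpath E ys x y \<Longrightarrow> ys = xs" using tpath_unique[OF tree] assms(2) by metis
qed

lemma tpath_is:
  assumes tree: "spanning_tree V E" and "x \<in> V" "y \<in> V"
  shows "is_tpath E (tpath E x y) x y"
proof -
  obtain xs where "is_tpath E xs x y" using tree assms unfolding spanning_tree_def by blast
  then show ?thesis using tpath_eq[OF tree] by metis
qed

lemma edge_V:
  assumes tree: "spanning_tree V E" and "{v, w} \<in> E"
  shows "v \<in> V" "w \<in> V" "v \<noteq> w"
proof -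
  obtain a c where "{v, w} = {a, c}" "a \<in> V" "c \<in> V" "a \<noteq> c"
    using assms unfolding spanning_tree_def by blast
  then show "v \<in> V" "w \<in> V" "v \<noteq> w" by (auto simp: doubleton_eq_iff)
qed

lemma tpath_V:
  assumes tree: "spanning_tree V E" and p: "is_tpath E xs x y" and "x \<in> V" and i: "i < length xs"
  shows "xs ! i \<in> V"
proof (cases i)
  case 0 then show ?thesis using p assms(3) unfolding is_tpath_def by (auto simp: hd_conv_nth)
next
  case (Suc k)
  then have "{xs ! k, xs ! i} \<in> E" using p i unfolding is_tpath_def by auto
  then show ?thesis using edge_V[OF tree] by blast
qed


lemma prefix_lemma:
  assumes tree: "spanning_tree V E" and r: "r \<in> V" and v: "v \<in> V" and i: "i < length (tpath E r v)"
  shows "tpath E r (tpath E r v ! i) = take (Suc i) (tpath E r v)"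
  using tpath_eq[OF tree tpath_take[OF tpath_is[OF tree r v] i]] .

lemma edge_parent:
  assumes tree: "spanning_tree V E" and r: "r \<in> V" and v: "v \<in> V" and w: "w \<in> V" and e: "{v, w} \<in> E"
  shows "tpath E r w = tpath E r v @ [w] \<or> tpath E r v = tpath E r w @ [v]"
proof (cases "w \<in> set (tpath E r v)")
  case True
  let ?P = "tpath E r v"
  have P: "is_tpath E ?P r v" using tpath_is[OF tree r v] .
  obtain k where k: "k < length ?P" "?P ! k = w" using True by (metis in_set_conv_nth)
  have dp: "is_tpath E (drop k ?P) w v" using tpath_drop[OF P k(1)] k by simp
  have vw: "v \<noteq> w" using edge_V[OF tree e] by simp
  have n1: "length (drop k ?P) \<noteq> 1"
  proof
    assume "length (drop k ?P) = 1"
    then have "hd (drop k ?P) = last (drop k ?P)" by (cases "drop k ?P") auto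
    then show False using dp vw unfolding is_tpath_def by auto
  qed
  have n3: "\<not> length (drop k ?P) \<ge> 3"
  proof
    assume "length (drop k ?P) \<ge> 3"
    moreover have "hd (drop k ?P) = w" "last (drop k ?P) = v" "distinct (drop k ?P)"
      "\<forall>i. Suc i < length (drop k ?P) \<longrightarrow> {drop k ?P ! i, drop k ?P ! Suc i} \<in> E"
      using dp unfolding is_tpath_def by blast+
    moreover have "{v, w} \<in> E" by fact
    ultimately have "is_cycle E (drop k ?P)" unfolding is_cycle_def by simp
    then show False using tree unfolding spanning_tree_def by blast
  qed
  have l2: "length ?P = k + 2" using n1 n3 k by auto
  have "?P = take (Suc k) ?P @ drop (Suc k) ?P" by simp
  moreover have "drop (Suc k) ?P = [v]"
  proof -
    have sk: "Suc k < length ?P" using l2 by simp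
    have "?P ! Suc k # drop (Suc (Suc k)) ?P = drop (Suc k) ?P" by (rule Cons_nth_drop_Suc[OF sk])
    moreover have "drop (Suc (Suc k)) ?P = []" using l2 by simp
    ultimately have dd: "drop (Suc k) ?P = [?P ! Suc k]" by metis
    have "?P \<noteq> []" "last ?P = v" using tpath_ne[OF P] by auto
    then have "last ?P = ?P ! (length ?P - 1)" by (simp add: last_conv_nth)
    then have "?P ! Suc k = v" using l2 \<open>last ?P = v\<close> by simp
    then show ?thesis using dd by simp
  qed
  moreover have "take (Suc k) ?P = tpath E r w" using prefix_lemma[OF tree r v k(1)] k by simp
  ultimately show ?thesis by simp
next
  case False
  have "is_tpath E (tpath E r v @ [w]) r w"
    using tpath_app[OF tpath_is[OF tree r v] False e] .
  then show ?thesis using tpath_eq[OF tree] by blast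
qed



lemma lastP:
  assumes tree: "spanning_tree V E" and r: "r \<in> V" and v: "v \<in> V"
  shows "last (tpath E r v) = v" "tpath E r v \<noteq> []" "hd (tpath E r v) = r"
  using tpath_ne[OF tpath_is[OF tree r v]] by auto

lemma valley_step:
  assumes tree: "spanning_tree V E" and r: "r \<in> V"
    and p: "is_tpath E xs x y" and x: "x \<in> V" and m: "m < length xs"
    and mn: "\<forall>i<length xs. length (tpath E r (xs ! m)) \<le> length (tpath E r (xs ! i))"
  shows "m \<le> s \<Longrightarrow> Suc s < length xs \<Longrightarrow> tpath E r (xs ! Suc s) = tpath E r (xs ! s) @ [xs ! Suc s]"
proof -
  let ?P = "tpath E r"
  have edge: "\<And>i. Suc i < length xs \<Longrightarrow> {xs ! i, xs ! Suc i} \<in> E" using p unfolding is_tpath_def by auto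
  have inV: "\<And>i. i < length xs \<Longrightarrow> xs ! i \<in> V" using tpath_V[OF tree p x] by blast
  have dist: "distinct xs" using p unfolding is_tpath_def by auto
  have ep: "?P (xs ! Suc i) = ?P (xs ! i) @ [xs ! Suc i] \<or> ?P (xs ! i) = ?P (xs ! Suc i) @ [xs ! i]"
    if "Suc i < length xs" for i
    using edge_parent[OF tree r inV[of i] inV[of "Suc i"] edge[OF that]] that by auto
  have base: "?P (xs ! Suc m) = ?P (xs ! m) @ [xs ! Suc m]" if "Suc m < length xs"
  proof -
    have "\<not> ?P (xs ! m) = ?P (xs ! Suc m) @ [xs ! m]"
    proof
      assume "?P (xs ! m) = ?P (xs ! Suc m) @ [xs ! m]"
      then have "length (?P (xs ! m)) = length (?P (xs ! Suc m)) + 1" by simp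
      then show False using mn that by auto
    qed
    then show ?thesis using ep[OF that] by blast
  qed
  have step: "?P (xs ! Suc (Suc n)) = ?P (xs ! Suc n) @ [xs ! Suc (Suc n)]"
    if "Suc (Suc n) < length xs" "?P (xs ! Suc n) = ?P (xs ! n) @ [xs ! Suc n]" for n
  proof -
    have "\<not> ?P (xs ! Suc n) = ?P (xs ! Suc (Suc n)) @ [xs ! Suc n]"
    proof
      assume "?P (xs ! Suc n) = ?P (xs ! Suc (Suc n)) @ [xs ! Suc n]"
      then have "?P (xs ! Suc (Suc n)) = ?P (xs ! n)" using that(2) by simp
      then have "last (?P (xs ! Suc (Suc n))) = last (?P (xs ! n))" by simp
      then have "xs ! Suc (Suc n) = xs ! n" using lastP[OF tree r inV] that(1) by simp
      then show False using dist that(1) nth_eq_iff_index_eq[of xs "Suc (Suc n)" n] by simp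
    qed
    then show ?thesis using ep[OF that(1)] by blast
  qed
  have "m \<le> s \<longrightarrow> Suc s < length xs \<longrightarrow> ?P (xs ! Suc s) = ?P (xs ! s) @ [xs ! Suc s]"
  proof (induction s)
    case 0 show ?case
    proof (intro impI)
      assume "m \<le> 0" "Suc 0 < length xs"
      then show "?P (xs ! Suc 0) = ?P (xs ! 0) @ [xs ! Suc 0]" using base by simp
    qed
  next
    case (Suc n)
    show ?case
    proof (cases "m = Suc n")
      case True then show ?thesis using base by simp
    next
      case False then show ?thesis using Suc step by auto
    qed
  qed
  then show "m \<le> s \<Longrightarrow> Suc s < length xs \<Longrightarrow> ?P (xs ! Suc s) = ?P (xs ! s) @ [xs ! Suc s]" by blast
qed

lemma valley:
  assumes tree: "spanning_tree V E" and r: "r \<in> V"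
    and p: "is_tpath E xs x y" and x: "x \<in> V" and m: "m < length xs"
    and mn: "\<forall>i<length xs. length (tpath E r (xs ! m)) \<le> length (tpath E r (xs ! i))"
  shows "m \<le> s \<Longrightarrow> s < length xs \<Longrightarrow>
    length (tpath E r (xs ! s)) = length (tpath E r (xs ! m)) + (s - m) \<and>
    (\<forall>q \<le> s - m. tpath E r (xs ! s) ! (length (tpath E r (xs ! m)) - 1 + q) = xs ! (m + q))"
proof (induction s)
  let ?P = "tpath E r"
  have inV: "\<And>i. i < length xs \<Longrightarrow> xs ! i \<in> V" using tpath_V[OF tree p x] by blast
  have ne: "?P (xs ! m) \<noteq> []" "last (?P (xs ! m)) = xs ! m" using lastP[OF tree r inV[OF m]] by auto
  have base: "?P (xs ! m) ! (length (?P (xs ! m)) - 1) = xs ! m" using ne by (simp add: last_conv_nth)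
  {
    case 0
    then have m0: "m = 0" by simp
    show ?case using base m0 by simp
  next
    case (Suc n)
    show ?case
    proof (cases "m = Suc n")
      case True then show ?thesis using base by simp
    next
      case False
      then have mn': "m \<le> n" using Suc.prems by simp
      have IH: "length (?P (xs ! n)) = length (?P (xs ! m)) + (n - m)"
        "\<forall>q \<le> n - m. ?P (xs ! n) ! (length (?P (xs ! m)) - 1 + q) = xs ! (m + q)"
        using Suc.IH mn' Suc.prems by auto
      have st: "?P (xs ! Suc n) = ?P (xs ! n) @ [xs ! Suc n]"
        using valley_step[OF tree r p x m mn mn' ] Suc.prems by simp
      have l1: "length (?P (xs ! m)) \<ge> 1" using ne by (simp add: Suc_leI)
      show ?thesis
      proof (intro conjI allI impI)
        show "length (?P (xs ! Suc n)) = length (?P (xs ! m)) + (Suc n - m)" using st IH mn' by simp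
      next
        fix q assume q: "q \<le> Suc n - m"
        show "?P (xs ! Suc n) ! (length (?P (xs ! m)) - 1 + q) = xs ! (m + q)"
        proof (cases "q \<le> n - m")
          case True
          have lt: "length (?P (xs ! m)) - 1 + q < length (?P (xs ! n))" using IH(1) True l1 by linarith
          have "?P (xs ! Suc n) ! (length (?P (xs ! m)) - 1 + q) = ?P (xs ! n) ! (length (?P (xs ! m)) - 1 + q)"
            using st lt by (simp add: nth_append)
          then show ?thesis using IH(2) True by simp
        next
          case False
          then have "q = Suc n - m" using q by simp
          have eqi: "length (?P (xs ! m)) - 1 + q = length (?P (xs ! n))" using IH(1) \<open>q = Suc n - m\<close> l1 mn' by linarith
          have "?P (xs ! Suc n) ! (length (?P (xs ! m)) - 1 + q) = xs ! Suc n"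
            using st eqi by simp
          then show ?thesis using \<open>q = Suc n - m\<close> mn' by simp
        qed
      qed
    qed
  }
qed

lemma apex_idx_unique:
  assumes tree: "spanning_tree V E" and r: "r \<in> V"
    and p: "is_tpath E xs x y" and x: "x \<in> V" and m1: "m1 < length xs" and m2: "m2 < length xs"
    and mn1: "\<forall>i<length xs. length (tpath E r (xs ! m1)) \<le> length (tpath E r (xs ! i))"
    and mn2: "\<forall>i<length xs. length (tpath E r (xs ! m2)) \<le> length (tpath E r (xs ! i))"
  shows "m1 = m2"
proof (rule ccontr)
  assume ne: "m1 \<noteq> m2"
  have eq: "length (tpath E r (xs ! m1)) = length (tpath E r (xs ! m2))"
    using mn1 mn2 m1 m2 by (meson le_antisym)
  show False
  proof (cases "m1 < m2")
    case True
    then have "length (tpath E r (xs ! m2)) = length (tpath E r (xs ! m1)) + (m2 - m1)"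
      using conjunct1[OF valley[OF tree r p x m1 mn1, of m2]] m2 True by simp
    then show False using eq True by simp
  next
    case False
    then have "m2 < m1" using ne by simp
    then have "length (tpath E r (xs ! m1)) = length (tpath E r (xs ! m2)) + (m1 - m2)"
      using conjunct1[OF valley[OF tree r p x m2 mn2, of m1]] m1 \<open>m2 < m1\<close> by simp
    then show False using eq \<open>m2 < m1\<close> by simp
  qed
qed



lemma in_list_edges: "Suc i < length xs \<Longrightarrow> {xs ! i, xs ! Suc i} \<in> list_edges xs"
  unfolding list_edges_def by blast

lemma Pl_sub: "l = {x, y} \<Longrightarrow> list_edges (tpath E x y) \<subseteq> Pl E l"
  unfolding Pl_def by blast

theorem lemma9:
  fixes V :: "'a set" and E L F :: "'a set set" and w :: "'a set \<Rightarrow> real" and r :: 'a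
    and u :: "'a set" and t b v :: 'a and Fu :: "'a set set" and l1 l2 :: "'a set"
    and e :: "'a set"
  assumes tree: "spanning_tree V E"
    and links: "L \<subseteq> {{x, y} | x y. x \<in> V \<and> y \<in> V \<and> x \<noteq> y}"
    and weights: "\<forall>l\<in>L. w l > 0"
    and root: "r \<in> V"
    and sol: "F \<subseteq> L" "\<Union>(Pl E ` F) = E"
    and up: "u \<in> L" "u = {t, b}" "ancestor E r t b"
    and vu: "is_vu E r F u t v"
    and Fu: "is_Fu E r F u v Fu"
    and A: "in_Au E t b Fu l1 l2"
    and last_edge: "length (tpath E r (apex E r l2)) \<ge> 2"
      "e = {tpath E r (apex E r l2) ! (length (tpath E r (apex E r l2)) - 2),
            last (tpath E r (apex E r l2))}"
  shows "e \<in> Pl E u"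
proof -
  let ?P = "tpath E r"
  have FuB: "Fu \<subseteq> Bv E r F v" and cov: "Pl E u \<subseteq> \<Union>(Pl E ` Fu)"
    and minim: "\<forall>H. H \<subset> Fu \<longrightarrow> \<not> Pl E u \<subseteq> \<Union>(Pl E ` H)"
    using Fu unfolding is_Fu_def by auto
  have FuL: "Fu \<subseteq> L" using FuB sol(1) unfolding Bv_def by auto
  have l12: "l1 \<in> Fu" "l2 \<in> Fu" and pr: "prec_u E t b Fu l1 l2" using A unfolding in_Au_def by auto
  have tbV: "t \<in> V" "b \<in> V"
  proof -
    obtain x y where "u = {x, y}" "x \<in> V" "y \<in> V" using up(1) links by blast
    then show "t \<in> V" "b \<in> V" using up(2) by (auto simp: doubleton_eq_iff)
  qed
  have ne: "Pul E u Fu l \<noteq> {}" if "l \<in> Fu" for l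
  proof
    assume "Pul E u Fu l = {}"
    then have "Pl E u \<subseteq> \<Union>(Pl E ` (Fu - {l}))" unfolding Pul_def by blast
    moreover have "Fu - {l} \<subset> Fu" using that by blast
    ultimately show False using minim by blast
  qed
  obtain e1 where e1: "e1 \<in> Pul E u Fu l1" using ne[OF l12(1)] by blast
  obtain e2 where e2: "e2 \<in> Pul E u Fu l2" using ne[OF l12(2)] by blast
  define tb where "tb = tpath E t b"
  have pr': "\<forall>e1\<in>Pul E u Fu l1. \<forall>e2\<in>Pul E u Fu l2. \<exists>i j. i < j \<and> Suc j < length tb \<and>
        e1 = {tb ! i, tb ! Suc i} \<and> e2 = {tb ! j, tb ! Suc j}"
    using pr up(2) unfolding prec_u_def Let_def tb_def by simp
  have ex: "\<exists>i j. i < j \<and> Suc j < length tb \<and> e1 = {tb ! i, tb ! Suc i} \<and> e2 = {tb ! j, tb ! Suc j}"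
    by (rule bspec[OF bspec[OF pr' e1] e2])
  then obtain i j where ij: "i < j" "Suc j < length tb" "e1 = {tb ! i, tb ! Suc i}" "e2 = {tb ! j, tb ! Suc j}"
    by (elim exE conjE) (rule that; assumption)
  have ptb: "is_tpath E tb t b" using tpath_is[OF tree tbV] tb_def by simp
  have dtb: "distinct tb" using tpath_ne[OF ptb] by auto
  have l12ne: "l1 \<noteq> l2"
  proof
    assume "l1 = l2"
    then have e1': "e1 \<in> Pul E u Fu l2" using e1 by simp
    have "\<exists>i j. i < j \<and> Suc j < length tb \<and> e1 = {tb ! i, tb ! Suc i} \<and> e1 = {tb ! j, tb ! Suc j}"
      by (rule bspec[OF bspec[OF pr' e1] e1'])
    then obtain i' j' where ij1: "i' < j'" "Suc j' < length tb" and e1ij: "e1 = {tb ! i', tb ! Suc i'}" "e1 = {tb ! j', tb ! Suc j'}"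
      by (elim exE conjE) (rule that; assumption)
    have bd: "i' < length tb" "j' < length tb" "Suc j' < length tb" "i' \<noteq> j'" "i' \<noteq> Suc j'" using ij1 by linarith+
    have "tb ! i' \<in> e1" unfolding e1ij(1) by simp
    then have "tb ! i' \<in> {tb ! j', tb ! Suc j'}" unfolding e1ij(2) .
    then have "tb ! i' = tb ! j' \<or> tb ! i' = tb ! Suc j'" by simp
    then show False using nth_eq_iff_index_eq[OF dtb bd(1) bd(2)] nth_eq_iff_index_eq[OF dtb bd(1) bd(3)] bd(4,5) by blast
  qed
  have e2': "e2 \<in> Pl E u - \<Union>(Pl E ` (Fu - {l2}))" using e2 unfolding Pul_def .
  have e2u: "e2 \<in> Pl E u" using DiffD1[OF e2'] .
  have e2n: "e2 \<notin> \<Union>(Pl E ` (Fu - {l2}))" using e2' by (rule DiffE)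
  obtain l' where l': "l' \<in> Fu" "e2 \<in> Pl E l'" using cov e2u by blast
  have "l' = l2"
  proof (rule ccontr)
    assume "l' \<noteq> l2"
    then have "l' \<in> Fu - {l2}" using l' by simp
    then show False using e2n l'(2) by blast
  qed
  then have e2l2: "e2 \<in> Pl E l2" using l' by simp
  have e1': "e1 \<in> Pl E u - \<Union>(Pl E ` (Fu - {l1}))" using e1 unfolding Pul_def .
  have "l2 \<in> Fu - {l1}" using l12 l12ne by simp
  then have e1n: "e1 \<notin> Pl E l2" using DiffD2[OF e1'] by blast
  from e2l2 obtain S where S: "S \<in> {list_edges (tpath E x y) | x y. l2 = {x, y}}" "e2 \<in> S"
    unfolding Pl_def by (rule UnionE)
  from S(1) obtain x' y' where l2xy: "l2 = {x', y'}" and SX: "S = list_edges (tpath E x' y')" by blast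
  have e2X: "e2 \<in> list_edges (tpath E x' y')" using S(2) SX by simp
  obtain x0 y0 where "l2 = {x0, y0}" "x0 \<in> V" "y0 \<in> V" using FuL l12 links by blast
  then have xyV: "x' \<in> V" "y' \<in> V" using l2xy by (auto simp: doubleton_eq_iff)
  define X where "X = tpath E x' y'"
  have pX: "is_tpath E X x' y'" using tpath_is[OF tree xyV] X_def by simp
  have Xrev: "tpath E y' x' = rev X" using tpath_eq[OF tree tpath_rev[OF pX]] .
  have VlX: "Vl E l2 = set X"
  proof
    show "Vl E l2 \<subseteq> set X" unfolding Vl_def l2xy using Xrev X_def by (auto simp: doubleton_eq_iff)
    show "set X \<subseteq> Vl E l2" unfolding Vl_def l2xy X_def by blast
  qed
  have XE: "list_edges X \<subseteq> Pl E l2" using Pl_sub[OF l2xy] X_def by simp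
  have "l2 = {y', x'}" using l2xy by (simp add: insert_commute)
  then have "list_edges (tpath E y' x') \<subseteq> Pl E l2" by (rule Pl_sub)
  then have XrE: "list_edges (rev X) \<subseteq> Pl E l2" using Xrev by simp
  obtain s where s: "Suc s < length X" "e2 = {X ! s, X ! Suc s}" using e2X X_def unfolding list_edges_def by blast
  have Xne: "X \<noteq> []" using tpath_ne[OF pX] by blast
  define M where "M = Min ((\<lambda>i. length (?P (X ! i))) ` {..<length X})"
  have "M \<in> (\<lambda>i. length (?P (X ! i))) ` {..<length X}" unfolding M_def using Xne by (intro Min_in) auto
  then obtain m where m: "m < length X" "length (?P (X ! m)) = M" by auto
  have mn: "\<forall>i<length X. length (?P (X ! m)) \<le> length (?P (X ! i))" using m unfolding M_def by (auto intro: Min_le)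
  have "\<exists>Y x'' y'' m' s'. is_tpath E Y x'' y'' \<and> x'' \<in> V \<and> list_edges Y \<subseteq> Pl E l2 \<and> set Y = set X \<and>
     m' < length Y \<and> (\<forall>i<length Y. length (?P (Y ! m')) \<le> length (?P (Y ! i))) \<and>
     m' \<le> s' \<and> Suc s' < length Y \<and> e2 = {Y ! s', Y ! Suc s'}"
  proof (cases "m \<le> s")
    case True
    then show ?thesis using pX xyV XE m mn s by blast
  next
    case False
    let ?n = "length X"
    have r1: "rev X ! (?n - 1 - m) = X ! m" using m by (simp add: rev_nth)
    have r2: "\<forall>i<length (rev X). length (?P (rev X ! (?n - 1 - m))) \<le> length (?P (rev X ! i))"
      using r1 mn by (simp add: rev_nth)
    have r3: "rev X ! (?n - 2 - s) = X ! Suc s" "rev X ! Suc (?n - 2 - s) = X ! s"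
      using s(1) by (simp_all add: rev_nth Suc_diff_Suc)
    have f1: "e2 = {rev X ! (?n - 2 - s), rev X ! Suc (?n - 2 - s)}" using r3 s(2) by (simp add: insert_commute)
    have f2: "?n - 1 - m \<le> ?n - 2 - s" "Suc (?n - 2 - s) < length (rev X)" "?n - 1 - m < length (rev X)"
      using False s(1) m by auto
    have f3: "set (rev X) = set X" by simp
    show ?thesis using tpath_rev[OF pX] xyV(2) XrE r2 f1 f2 f3 by blast
  qed
  then obtain Y x'' y'' m' s' where pY: "is_tpath E Y x'' y''" and x''V: "x'' \<in> V"
    and YE: "list_edges Y \<subseteq> Pl E l2" and Ys: "set Y = set X" and m': "m' < length Y"
    and mnY: "\<forall>i<length Y. length (?P (Y ! m')) \<le> length (?P (Y ! i))"
    and s': "m' \<le> s'" "Suc s' < length Y" and e2Y: "e2 = {Y ! s', Y ! Suc s'}"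
    by blast
  have YV: "\<And>i. i < length Y \<Longrightarrow> Y ! i \<in> V" using tpath_V[OF tree pY x''V] by blast
  have len1: "\<And>z. z \<in> V \<Longrightarrow> length (?P z) \<ge> 1" using lastP[OF tree root] by (simp add: Suc_leI)
  have apexY: "apex E r l2 = Y ! m'"
    unfolding apex_def
  proof (rule the_equality)
    have "Y ! m' \<in> set Y" using m' by simp
    moreover have "\<forall>x\<in>set Y. depth E r (Y ! m') \<le> depth E r x"
    proof
      fix x assume "x \<in> set Y"
      then obtain i where "i < length Y" "x = Y ! i" by (metis in_set_conv_nth)
      then show "depth E r (Y ! m') \<le> depth E r x" using mnY unfolding depth_def by (simp add: diff_le_mono)
    qed
    ultimately show "Y ! m' \<in> Vl E l2 \<and> (\<forall>x\<in>Vl E l2. depth E r (Y ! m') \<le> depth E r x)"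
      using VlX Ys by simp
  next
    fix a assume a: "a \<in> Vl E l2 \<and> (\<forall>x\<in>Vl E l2. depth E r a \<le> depth E r x)"
    then obtain k where k: "k < length Y" "Y ! k = a" using VlX Ys by (metis in_set_conv_nth)
    have "\<forall>i<length Y. length (?P (Y ! k)) \<le> length (?P (Y ! i))"
    proof (intro allI impI)
      fix i assume i: "i < length Y"
      then have "depth E r a \<le> depth E r (Y ! i)" using a VlX Ys by auto
      then show "length (?P (Y ! k)) \<le> length (?P (Y ! i))"
      proof -
        have "1 \<le> length (?P a)" using len1[OF YV[OF k(1)]] k(2) by simp
        then have "length (?P a) \<le> length (?P (Y ! i))"
          using len1[OF YV[OF i]] \<open>depth E r a \<le> depth E r (Y ! i)\<close> unfolding depth_def by linarith
        then show ?thesis using k(2) by simp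
      qed
    qed
    then have "k = m'" using apex_idx_unique[OF tree root pY x''V k(1) m' _ mnY] by blast
    then show "a = Y ! m'" using k by simp
  qed
  define a where "a = Y ! m'"
  define n where "n = length (?P a)"
  have aV: "a \<in> V" using YV m' a_def by simp
  have n1: "n \<ge> 1" using len1[OF aV] n_def by simp
  define pb where "pb = ?P b"
  have pbP: "is_tpath E pb r b" using tpath_is[OF tree root tbV(2)] pb_def by simp
  obtain k where k: "k < length pb" "pb ! k = t" using up(3) unfolding ancestor_def pb_def by (metis in_set_conv_nth)
  have tbd: "tb = drop k pb" using tpath_eq[OF tree tpath_drop[OF pbP k(1)]] k tb_def by simp
  have lenj: "Suc (k + j) < length pb" using ij(2) tbd by simp
  have e2b: "e2 = {pb ! (k + j), pb ! Suc (k + j)}" using ij(4) tbd lenj by simp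
  have e1b: "e1 = {pb ! (k + i), pb ! Suc (k + i)}" using ij(1,3) tbd lenj by simp
  define d where "d = pb ! Suc (k + j)"
  have pd: "?P d = take (Suc (Suc (k + j))) pb"
    using prefix_lemma[OF tree root tbV(2), of "Suc (k + j)"] lenj d_def pb_def by simp
  have pc: "?P (pb ! (k + j)) = take (Suc (k + j)) pb"
    using prefix_lemma[OF tree root tbV(2), of "k + j"] lenj pb_def by simp
  have lpd: "length (?P d) = Suc (Suc (k + j))" using pd lenj by simp
  have lpc: "length (?P (pb ! (k + j))) = Suc (k + j)" using pc lenj by simp
  have st: "?P (Y ! Suc s') = ?P (Y ! s') @ [Y ! Suc s']"
    using valley_step[OF tree root pY x''V m' mnY s'(1) s'(2)] .
  have dY: "Y ! Suc s' = d"
  proof -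
    have "{Y ! s', Y ! Suc s'} = {pb ! (k + j), d}" using e2b e2Y d_def by simp
    then have "(Y ! s' = pb ! (k + j) \<and> Y ! Suc s' = d) \<or> (Y ! s' = d \<and> Y ! Suc s' = pb ! (k + j))"
      by (auto simp: doubleton_eq_iff)
    moreover have "\<not> (Y ! s' = d \<and> Y ! Suc s' = pb ! (k + j))"
    proof
      assume "Y ! s' = d \<and> Y ! Suc s' = pb ! (k + j)"
      then have "length (?P (pb ! (k + j))) = length (?P d) + 1" using st by simp
      then show False using lpd lpc by simp
    qed
    ultimately show ?thesis by blast
  qed
  have V2: "length (?P d) = n + (Suc s' - m') \<and> (\<forall>q \<le> Suc s' - m'. ?P d ! (n - 1 + q) = Y ! (m' + q))"
    using valley[OF tree root pY x''V m' mnY, of "Suc s'"] s' dY a_def n_def by simp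
  show ?thesis
  proof (cases "Suc k < n")
    case True
    have "?P d ! (n - 1) = a" using conjunct2[OF V2] a_def by (metis add_0_right zero_le)
    moreover have "n - 1 < Suc (Suc (k + j))" using V2 lpd n1 by linarith
    ultimately have pbn: "pb ! (n - 1) = a" using pd by simp
    have nl: "n - 1 < length pb" using \<open>n - 1 < Suc (Suc (k + j))\<close> lenj by linarith
    have pa: "?P a = take n pb"
      using prefix_lemma[OF tree root tbV(2), of "n - 1"] nl pbn pb_def n1 by simp
    have eq: "e = {pb ! (n - 2), pb ! (n - 1)}"
    proof -
      have "e = {?P a ! (n - 2), last (?P a)}" using last_edge(2) apexY a_def n_def by simp
      moreover have "last (?P a) = a" using lastP[OF tree root aV] by simp
      moreover have "?P a ! (n - 2) = pb ! (n - 2)" using pa True by simp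
      ultimately show ?thesis using pbn by simp
    qed
    have "tb ! (n - 2 - k) = pb ! (n - 2)" "tb ! Suc (n - 2 - k) = pb ! (n - 1)"
      using tbd True nl by (simp_all add: Suc_diff_Suc)
    moreover have "Suc (n - 2 - k) < length tb" using tbd True nl by simp
    ultimately have "e \<in> list_edges tb" using eq in_list_edges[of "n - 2 - k" tb] by simp
    then show ?thesis using Pl_sub[OF up(2)] tb_def by blast
  next
    case False
    define q where "q = Suc (k + i) - n"
    have qb: "Suc q \<le> Suc s' - m'" using V2 lpd ij(1) False n1 q_def by linarith
    have i1: "n - 1 + q = k + i" "n - 1 + Suc q = Suc (k + i)" using False n1 q_def by linarith+
    have "?P d ! (k + i) = Y ! (m' + q)" "?P d ! Suc (k + i) = Y ! (m' + Suc q)"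
      using conjunct2[OF V2] qb i1 by (metis Suc_leD)+
    moreover have "?P d ! (k + i) = pb ! (k + i)" "?P d ! Suc (k + i) = pb ! Suc (k + i)"
      using pd ij(1) by simp_all
    ultimately have "e1 = {Y ! (m' + q), Y ! Suc (m' + q)}" using e1b by simp
    moreover have "Suc (m' + q) < length Y" using qb s' by linarith
    ultimately have "e1 \<in> list_edges Y" using in_list_edges by metis
    then show ?thesis using YE e1n by blast
  qed
qed

end
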